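(* There is a constant $C > 0$ such that for all $\alpha > 0$ and all $u \in \mathrm{H}^1(\mathbb{R})$: $$|u|_{\mathrm{H}^{1/2}}^2 \leq C\left( \| u\|_{\mathrm{L}^2}^2 + |\log(\alpha)|\, |u|_{\mathrm{H}_w^{1/2}}^2 + \alpha \int_{\mathbb{R}} |\dot u|^2\right),$$ where $\dot u$ is the derivative of $u$.
   Context: $|u|_{\mathrm{H}^{1/2}}$ is the Slobodetski seminorm: $|u|_{\mathrm{H}^{1/2}}^2 = \iint_{\mathbb{R}^2} \frac{|u(x+y)-u(x)|^2}{|y|^{2}}\,\mathrm{d}x\,\mathrm{d}y$. For $u \in \mathrm{L}^2(\mathbb{R})$, $|u|_{\mathrm{H}^{1/2}_w}$ is the smallest $C \geq 0$ such that $\|u - u(\cdot + y)\|_{\mathrm{L}^2} \leq C|y|^{1/2}$ for all $y \in \mathbb{R}$. *)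

theory Defs
  imports "HOL-Analysis.Analysis"
begin

definition L2 :: "(real \<Rightarrow> real) \<Rightarrow> bool" where
  "L2 u \<longleftrightarrow> u \<in> borel_measurable lborel \<and> integrable lborel (\<lambda>x. (u x)\<^sup>2)"

definition L2_norm :: "(real \<Rightarrow> real) \<Rightarrow> real" where
  "L2_norm u = sqrt (\<integral>x. (u x)\<^sup>2 \<partial>lborel)"

definition test_fun :: "(real \<Rightarrow> real) \<Rightarrow> bool" where
  "test_fun \<phi> \<longleftrightarrow> (\<forall>x. \<phi> differentiable at x) \<and> continuous_on UNIV (deriv \<phi>)
      \<and> (\<exists>R. \<forall>x. \<bar>x\<bar> > R \<longrightarrow> \<phi> x = 0)"

definition weak_deriv :: "(real \<Rightarrow> real) \<Rightarrow> (real \<Rightarrow> real) \<Rightarrow> bool" where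
  "weak_deriv u v \<longleftrightarrow> (\<forall>\<phi>. test_fun \<phi> \<longrightarrow>
      (\<integral>x. u x * deriv \<phi> x \<partial>lborel) = - (\<integral>x. v x * \<phi> x \<partial>lborel))"

definition H1_with_deriv :: "(real \<Rightarrow> real) \<Rightarrow> (real \<Rightarrow> real) \<Rightarrow> bool" where
  "H1_with_deriv u v \<longleftrightarrow> L2 u \<and> L2 v \<and> weak_deriv u v"

definition H12_seminorm_sq :: "(real \<Rightarrow> real) \<Rightarrow> ennreal" where
  "H12_seminorm_sq u = (\<integral>\<^sup>+ p. ennreal ((u (fst p + snd p) - u (fst p))\<^sup>2 / (snd p)\<^sup>2)
      \<partial>(lborel \<Otimes>\<^sub>M lborel))"

definition H12w_seminorm :: "(real \<Rightarrow> real) \<Rightarrow> real" where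
  "H12w_seminorm u = Inf {C. C \<ge> 0 \<and> (\<forall>y. L2_norm (\<lambda>x. u x - u (x + y)) \<le> C * sqrt \<bar>y\<bar>)}"

end

theory Submission
  imports Defs
begin


definition q :: "real \<Rightarrow> real" where "q t = (max 0 t)^2"

lemma q_deriv: "(q has_real_derivative 2 * max 0 x) (at x)"
proof (cases "x = 0")
  case False
  show ?thesis
  proof (cases "x > 0")
    case True
    have ev: "\<forall>\<^sub>F y in nhds x. q y = y^2"
    proof -
      have "\<forall>\<^sub>F y in nhds x. y \<in> {0<..}" by (rule eventually_nhds_in_open) (use True in auto)
      then show ?thesis by (rule eventually_mono) (auto simp: q_def)
    qed
    have "((\<lambda>y. y^2) has_real_derivative 2 * x) (at x)"
      by (auto intro!: derivative_eq_intros)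
    then show ?thesis using True ev
      by (subst DERIV_cong_ev[of x x q "\<lambda>y. y^2"]) (auto simp: q_def)
  next
    case False
    with \<open>x \<noteq> 0\<close> have xn: "x < 0" by simp
    have ev: "\<forall>\<^sub>F y in nhds x. q y = 0"
    proof -
      have "\<forall>\<^sub>F y in nhds x. y \<in> {..<0}" by (rule eventually_nhds_in_open) (use xn in auto)
      then show ?thesis by (rule eventually_mono) (auto simp: q_def)
    qed
    have "((\<lambda>y. 0) has_real_derivative 0) (at x)"
      by (auto intro!: derivative_eq_intros)
    then show ?thesis using xn ev
      by (subst DERIV_cong_ev[of x x q "\<lambda>y. 0"]) (auto simp: q_def)
  qed
next
  case True
  have "((\<lambda>y. (q y - q 0) / (y - 0)) \<longlongrightarrow> 0) (at 0)"
  proof (rule tendsto_sandwich[where f="\<lambda>y. - \<bar>y\<bar>" and h="\<lambda>y. \<bar>y\<bar>"])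
    show "\<forall>\<^sub>F y in at 0. - \<bar>y\<bar> \<le> (q y - q 0) / (y - 0)"
      by (auto simp: q_def max_def power2_eq_square intro!: always_eventually)
    show "\<forall>\<^sub>F y in at 0. (q y - q 0) / (y - 0) \<le> \<bar>y\<bar>"
      by (auto simp: q_def max_def power2_eq_square intro!: always_eventually)
    show "((\<lambda>y. - \<bar>y\<bar>) \<longlongrightarrow> 0) (at (0::real))"
      by (auto intro!: tendsto_eq_intros)
    show "((\<lambda>y. \<bar>y\<bar>) \<longlongrightarrow> 0) (at (0::real))"
      by (auto intro!: tendsto_eq_intros)
  qed
  then show ?thesis using True by (simp add: has_field_derivative_iff)
qed


definition q' :: "real \<Rightarrow> real" where "q' t = 2 * max 0 t"

lemma q_deriv': "(q has_real_derivative q' x) (at x)" using q_deriv by (simp add: q'_def)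

lemma cont_q': "continuous_on UNIV q'" unfolding q'_def by (intro continuous_intros)

definition r :: "real \<Rightarrow> real" where "r t = 2 * q t - 4 * q (t - 1/2) + 2 * q (t - 1)"
definition r' :: "real \<Rightarrow> real" where "r' t = 2 * q' t - 4 * q' (t - 1/2) + 2 * q' (t - 1)"

lemma r_deriv: "(r has_real_derivative r' x) (at x)"
  unfolding r_def r'_def
  by (auto intro!: derivative_eq_intros DERIV_chain2[OF q_deriv'])

lemma cont_r': "continuous_on UNIV r'" unfolding r'_def q'_def by (intro continuous_intros)

lemma r_le0: "t \<le> 0 \<Longrightarrow> r t = 0" by (simp add: r_def q_def max_def)
lemma r_ge1: "t \<ge> 1 \<Longrightarrow> r t = 1" by (simp add: r_def q_def max_def power2_eq_square algebra_simps)
lemma r_mid1: "0 \<le> t \<Longrightarrow> t \<le> 1/2 \<Longrightarrow> r t = 2 * t^2" by (simp add: r_def q_def max_def)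
lemma r_mid2: "1/2 \<le> t \<Longrightarrow> t \<le> 1 \<Longrightarrow> r t = 1 - 2 * (1 - t)^2"
  by (simp add: r_def q_def max_def power2_eq_square algebra_simps)
lemma r_bounds: "0 \<le> r t \<and> r t \<le> 1"
proof -
  consider "t \<le> 0" | "0 \<le> t \<and> t \<le> 1/2" | "1/2 \<le> t \<and> t \<le> 1" | "1 \<le> t" by linarith
  then show ?thesis
  proof cases
    case 2
    have "t^2 \<le> (1/2)^2" using 2 by (intro power_mono) auto
    moreover have "0 \<le> t^2" by simp
    ultimately show ?thesis using 2 r_mid1[of t] by (simp add: power2_eq_square)
  next
    case 3
    have "(1-t)^2 \<le> (1/2)^2" using 3 by (intro power_mono) auto
    moreover have "0 \<le> (1-t)^2" by simp
    ultimately show ?thesis using 3 r_mid2[of t] by (simp add: power2_eq_square)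
  qed (auto simp: r_le0 r_ge1)
qed


definition psi :: "real \<Rightarrow> real \<Rightarrow> real \<Rightarrow> real \<Rightarrow> real" where
  "psi a b n x = r (n*(x-a)) * r (n*(b-x))"

lemma psi_deriv: "(psi a b n has_real_derivative
   (n * r' (n*(x-a)) * r (n*(b-x)) - r (n*(x-a)) * (n * r' (n*(b-x))))) (at x)"
  unfolding psi_def
  by (auto intro!: derivative_eq_intros DERIV_chain2[OF r_deriv])

lemma deriv_psi: "deriv (psi a b n) = (\<lambda>x. n * r' (n*(x-a)) * r (n*(b-x)) - r (n*(x-a)) * (n * r' (n*(b-x))))"
  using psi_deriv DERIV_imp_deriv by blast

lemma cont_r'_at: "isCont r' x" using cont_r' by (simp add: continuous_on_eq_continuous_at)
lemma cont_r_at: "isCont r x" using r_deriv DERIV_isCont by blast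

lemma test_psi: assumes "n > 0" shows "test_fun (psi a b n)"
  unfolding test_fun_def
proof (intro conjI allI)
  show "psi a b n differentiable at x" for x using psi_deriv real_differentiable_def by blast
  show "continuous_on UNIV (deriv (psi a b n))" unfolding deriv_psi
    by (intro continuous_at_imp_continuous_on ballI continuous_intros isCont_o2[OF _ cont_r'_at]
       isCont_o2[OF _ cont_r_at])
  show "\<exists>R. \<forall>x. R < \<bar>x\<bar> \<longrightarrow> psi a b n x = 0"
  proof (intro exI allI impI)
    fix x assume x: "\<bar>a\<bar> + \<bar>b\<bar> < \<bar>x\<bar>"
    show "psi a b n x = 0"
    proof (cases "x > 0")
      case True
      then have "b - x \<le> 0" using x by auto
      then have "n*(b-x) \<le> 0" using assms by (auto simp: mult_le_0_iff)
      then show ?thesis by (simp add: psi_def r_le0)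
    next
      case False
      then have "x - a \<le> 0" using x by auto
      then have "n*(x-a) \<le> 0" using assms by (auto simp: mult_le_0_iff)
      then show ?thesis by (simp add: psi_def r_le0)
    qed
  qed
qed

lemma psi_bound: assumes "n \<ge> 0" shows "\<bar>psi a b n x\<bar> \<le> indicator {a..b} x"
proof (cases "x \<in> {a..b}")
  case True then show ?thesis using r_bounds[of "n*(x-a)"] r_bounds[of "n*(b-x)"]
    by (auto simp: psi_def intro: mult_le_one)
next
  case False
  then consider "x < a" | "x > b" by auto
  then show ?thesis
  proof cases
    case 1
    then have "n*(x-a) \<le> 0" using assms by (auto simp: mult_le_0_iff)
    then show ?thesis using False by (simp add: psi_def r_le0)
  next
    case 2
    then have "n*(b-x) \<le> 0" using assms by (auto simp: mult_le_0_iff)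
    then show ?thesis using False by (simp add: psi_def r_le0)
  qed
qed

lemma psi_lim: "(\<lambda>k. psi a b (real (Suc k)) x) \<longlonglongrightarrow> indicator {a<..<b} x"
proof -
  have inf: "filterlim (\<lambda>k. real (Suc k)) at_top sequentially"
    using filterlim_compose[OF filterlim_real_sequentially filterlim_Suc] by (simp add: o_def)
  have ev: "\<forall>\<^sub>F k in sequentially. psi a b (real (Suc k)) x = indicator {a<..<b} x"
  proof (cases "a < x \<and> x < b")
    case True
    have "\<forall>\<^sub>F k in sequentially. real (Suc k) \<ge> 1 / (b - x) + 1 / (x - a)"
      using inf by (simp add: filterlim_at_top)
    then show ?thesis
    proof (rule eventually_mono)
      fix k assume k: "1 / (b - x) + 1 / (x - a) \<le> real (Suc k)"
      have bx: "b - x > 0" "x - a > 0" using True by auto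
      have p: "1/(b-x) > 0" "1/(x-a) > 0" using bx by auto
      have "1/(b-x) \<le> real (Suc k)" "1/(x-a) \<le> real (Suc k)" using k p by linarith+
      then have "1 \<le> real (Suc k) * (b - x)" "1 \<le> real (Suc k) * (x - a)"
        using bx by (simp_all add: pos_divide_le_eq mult.commute)
      then show "psi a b (real (Suc k)) x = indicator {a<..<b} x"
        using True by (simp add: psi_def r_ge1)
    qed
  next
    case False
    show ?thesis
    proof (rule always_eventually, intro allI)
      fix k
      have "real (Suc k) * (x - a) \<le> 0 \<or> real (Suc k) * (b - x) \<le> 0"
        using False by (auto simp: mult_le_0_iff)
      then show "psi a b (real (Suc k)) x = indicator {a<..<b} x"
        using False by (auto simp: psi_def r_le0)
    qed
  qed
  show ?thesis using ev by (rule tendsto_eventually)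
qed


lemma psi_measurable[measurable]: "psi a b n \<in> borel_measurable borel"
  unfolding psi_def r_def q_def by measurable

lemma ennreal_max_eq: "ennreal (max 0 t) = ennreal (max 0 (-t)) \<Longrightarrow> t = (0::real)"
  by (cases "t > 0"; cases "t < 0") (auto simp: max_def split: if_splits)

lemma step1:
  fixes h :: "real \<Rightarrow> real"
  assumes hm[measurable]: "h \<in> borel_measurable borel"
  assumes hi: "\<And>a b. integrable lborel (\<lambda>x. h x * indicator {a..b} x)"
  assumes ht: "\<And>\<phi>. test_fun \<phi> \<Longrightarrow> (\<integral>x. h x * \<phi> x \<partial>lborel) = 0"
  shows "(\<integral>x. h x * indicator {a<..<b} x \<partial>lborel) = 0"
proof -
    let ?s = "\<lambda>k x. h x * psi a b (real (Suc k)) x"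
    let ?f = "\<lambda>x. h x * indicator {a<..<b} x"
    let ?w = "\<lambda>x. \<bar>h x * indicator {a..b} x\<bar>"
    have m1: "?f \<in> borel_measurable lborel" by measurable
    have m2: "?s k \<in> borel_measurable lborel" for k by measurable
    have wi: "integrable lborel ?w" using hi by (rule integrable_abs)
    have lim: "AE x in lborel. (\<lambda>k. ?s k x) \<longlonglongrightarrow> ?f x"
        by (intro always_eventually allI tendsto_mult tendsto_const psi_lim)
    have bd: "AE x in lborel. norm (?s k x) \<le> ?w x" for k
      proof (intro always_eventually allI)
        fix x
        have "\<bar>psi a b (real (Suc k)) x\<bar> \<le> indicator {a..b} x" by (rule psi_bound) simp
        then show "norm (?s k x) \<le> ?w x"
          by (simp add: abs_mult mult_left_mono)
      qed
    have L: "(\<lambda>k. integral\<^sup>L lborel (?s k)) \<longlonglongrightarrow> integral\<^sup>L lborel ?f"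
      by (rule integral_dominated_convergence[OF m1 m2 wi lim bd])
    moreover have "(\<lambda>k. integral\<^sup>L lborel (?s k)) = (\<lambda>k. 0)"
      using ht test_psi by simp
    ultimately show ?thesis using LIMSEQ_unique tendsto_const by metis
qed

lemma fund:
  fixes h :: "real \<Rightarrow> real"
  assumes hm[measurable]: "h \<in> borel_measurable borel"
  assumes hi: "\<And>a b. integrable lborel (\<lambda>x. h x * indicator {a..b} x)"
  assumes ht: "\<And>\<phi>. test_fun \<phi> \<Longrightarrow> (\<integral>x. h x * \<phi> x \<partial>lborel) = 0"
  shows "AE x in lborel. h x = 0"
proof -
  have step1: "(\<integral>x. h x * indicator {a<..<b} x \<partial>lborel) = 0" for a b
    using step1[OF hm hi ht] by blast
  define hN where "hN N x = h x * indicator {- real N<..<real N} x" for N :: nat and x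
  have hN_m[measurable]: "hN N \<in> borel_measurable borel" for N unfolding hN_def by measurable
  have hN_int: "integrable lborel (hN N)" for N
  proof -
    have "integrable lborel (\<lambda>x. indicator {- real N<..<real N} x *\<^sub>R (h x * indicator {- real N..real N} x))"
      by (rule integrable_mult_indicator) (auto intro: hi)
    moreover have "(\<lambda>x. indicator {- real N<..<real N} x *\<^sub>R (h x * indicator {- real N..real N} x)) = hN N"
      unfolding hN_def by (auto simp: fun_eq_iff indicator_def)
    ultimately show ?thesis by simp
  qed
  have hN0: "AE x in lborel. hN N x = 0" for N
  proof -
    define f1 where "f1 x = ennreal (max 0 (hN N x))" for x
    define f2 where "f2 x = ennreal (max 0 (- hN N x))" for x
    have [measurable]: "f1 \<in> borel_measurable borel" "f2 \<in> borel_measurable borel"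
      unfolding f1_def f2_def by measurable
    have key: "(\<integral>\<^sup>+y. f1 y * indicator {x<..} y \<partial>lborel) = ennreal (\<integral>y. max 0 (hN N y * indicator {x<..} y) \<partial>lborel)
       \<and> (\<integral>\<^sup>+y. f2 y * indicator {x<..} y \<partial>lborel) = ennreal (\<integral>y. max 0 (- (hN N y * indicator {x<..} y)) \<partial>lborel)
       \<and> (\<integral>y. max 0 (hN N y * indicator {x<..} y) \<partial>lborel) = (\<integral>y. max 0 (- (hN N y * indicator {x<..} y)) \<partial>lborel)" for x
    proof -
      let ?g = "\<lambda>y. hN N y * indicator {x<..} y"
      have "integrable lborel (\<lambda>y. indicator {x<..} y *\<^sub>R hN N y)"
        by (rule integrable_mult_indicator) (use hN_int in auto)
      then have gi: "integrable lborel ?g" by (simp add: mult.commute)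
      have i1: "integrable lborel (\<lambda>y. max 0 (?g y))" using gi by (intro integrable_max) auto
      have i2: "integrable lborel (\<lambda>y. max 0 (- ?g y))" using gi by (intro integrable_max) auto
      have e1: "(\<integral>\<^sup>+y. f1 y * indicator {x<..} y \<partial>lborel) = (\<integral>\<^sup>+y. ennreal (max 0 (?g y)) \<partial>lborel)"
        apply (intro nn_integral_cong)
        subgoal for y by (cases "x < y") (simp_all add: f1_def)
        done
      have e2: "(\<integral>\<^sup>+y. f2 y * indicator {x<..} y \<partial>lborel) = (\<integral>\<^sup>+y. ennreal (max 0 (- ?g y)) \<partial>lborel)"
        apply (intro nn_integral_cong)
        subgoal for y by (cases "x < y") (simp_all add: f2_def)
        done
      have "?g y = h y * indicator {max x (- real N)<..<real N} y" for y
        unfolding hN_def indicator_def by (simp; smt (verit))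
      then have "?g = (\<lambda>y. h y * indicator {max x (- real N)<..<real N} y)" by blast
      then have g0: "(\<integral>y. ?g y \<partial>lborel) = 0" using step1 by simp
      have "(\<integral>y. max 0 (?g y) \<partial>lborel) - (\<integral>y. max 0 (- ?g y) \<partial>lborel)
           = (\<integral>y. max 0 (?g y) - max 0 (- ?g y) \<partial>lborel)"
        by (rule Bochner_Integration.integral_diff[symmetric]) (fact i1, fact i2)
      also have "\<dots> = (\<integral>y. ?g y \<partial>lborel)"
        by (rule Bochner_Integration.integral_cong) (simp_all add: max_def)
      finally have d: "(\<integral>y. max 0 (?g y) \<partial>lborel) = (\<integral>y. max 0 (- ?g y) \<partial>lborel)"
        using g0 by simp
      have n1: "(\<integral>\<^sup>+y. ennreal (max 0 (?g y)) \<partial>lborel) = ennreal (\<integral>y. max 0 (?g y) \<partial>lborel)"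
        by (rule nn_integral_eq_integral[OF i1]) simp
      have n2: "(\<integral>\<^sup>+y. ennreal (max 0 (- ?g y)) \<partial>lborel) = ennreal (\<integral>y. max 0 (- ?g y) \<partial>lborel)"
        by (rule nn_integral_eq_integral[OF i2]) simp
      show ?thesis using e1 e2 n1 n2 d by simp
    qed
    have "density lborel f1 = density lborel f2"
    proof (rule measure_eqI_lessThan)
      show "emeasure (density lborel f1) {x<..} < \<infinity>" for x
        using key[of x] by (simp add: emeasure_density)
      show "emeasure (density lborel f1) {x<..} = emeasure (density lborel f2) {x<..}" for x
        using key[of x] by (simp add: emeasure_density)
    qed simp_all
    moreover have "integral\<^sup>N lborel f1 \<noteq> \<infinity>"
    proof -
      have "integrable lborel (\<lambda>y. max 0 (hN N y))" using hN_int by (intro integrable_max) auto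
      then have "(\<integral>\<^sup>+y. f1 y \<partial>lborel) = ennreal (\<integral>y. max 0 (hN N y) \<partial>lborel)"
        unfolding f1_def by (auto simp: nn_integral_eq_integral)
      then show ?thesis by simp
    qed
    ultimately have "AE x in lborel. f1 x = f2 x"
      using finite_density_unique[of f1 lborel f2] by auto
    then show ?thesis by eventually_elim (auto simp: f1_def f2_def intro: ennreal_max_eq)
  qed
  then have "AE x in lborel. \<forall>N. hN N x = 0" by (simp add: AE_all_countable)
  then show ?thesis
  proof eventually_elim
    fix x assume a: "\<forall>N. hN N x = 0"
    obtain N :: nat where "\<bar>x\<bar> < real N" using reals_Archimedean2 by blast
    with a[rule_format, of N] show "h x = 0" by (auto simp: hN_def indicator_def)
  qed
qed


lemma abs_mult_le_sq: "\<bar>a * b\<bar> \<le> (a^2 + b^2) / (2::real)"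
proof -
  have "0 \<le> (\<bar>a\<bar> - \<bar>b\<bar>)^2" by simp
  then show ?thesis by (simp add: power2_diff abs_mult power2_abs)
qed

lemma L2_mult: assumes "L2 f" "L2 g" shows "integrable lborel (\<lambda>x. f x * g x)"
proof -
  have [measurable]: "f \<in> borel_measurable lborel" "g \<in> borel_measurable lborel" using assms by (auto simp: L2_def)
  have "integrable lborel (\<lambda>x. ((f x)^2 + (g x)^2) / 2)" using assms by (auto simp: L2_def)
  then show ?thesis
  proof (rule Bochner_Integration.integrable_bound)
    show "(\<lambda>x. f x * g x) \<in> borel_measurable lborel" by measurable
    show "AE x in lborel. norm (f x * g x) \<le> norm (((f x)^2 + (g x)^2) / 2)"
    proof (intro always_eventually allI)
      fix x
      have "\<bar>f x * g x\<bar> \<le> ((f x)^2 + (g x)^2) / 2" by (rule abs_mult_le_sq)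
      also have "\<dots> \<le> \<bar>((f x)^2 + (g x)^2) / 2\<bar>" by simp
      finally show "norm (f x * g x) \<le> norm (((f x)^2 + (g x)^2) / 2)" by simp
    qed
  qed
qed

lemma L2_diff: assumes "L2 f" "L2 g" shows "L2 (\<lambda>x. f x - g x)"
proof -
  have [measurable]: "f \<in> borel_measurable lborel" "g \<in> borel_measurable lborel" using assms by (auto simp: L2_def)
  have "integrable lborel (\<lambda>x. (f x)^2 + (g x)^2 - 2 * (f x * g x))"
    using assms L2_mult[OF assms] by (auto simp: L2_def)
  then show ?thesis unfolding L2_def by (simp add: power2_diff algebra_simps)
qed

lemma L2_translate: assumes "L2 f" shows "L2 (\<lambda>x. f (x + s))"
proof -
  have [measurable]: "f \<in> borel_measurable borel" using assms by (auto simp: L2_def)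
  have "integrable lborel (\<lambda>x. (f x)^2)" using assms by (auto simp: L2_def)
  then have "integrable lborel (\<lambda>x. (f (s + 1 * x))^2)"
    by (rule lborel_integrable_real_affine) simp
  then show ?thesis unfolding L2_def by (simp add: add.commute)
qed

lemma int_translate: "(\<integral>x. f (x + s) \<partial>lborel) = (\<integral>x. f x \<partial>lborel)" for f :: "real \<Rightarrow> real"
  using lborel_integral_real_affine[of 1 f s] by (simp add: add.commute)

lemma nn_int_translate: fixes f :: "real \<Rightarrow> ennreal" shows "f \<in> borel_measurable borel \<Longrightarrow> (\<integral>\<^sup>+x. f (x + s) \<partial>lborel) = (\<integral>\<^sup>+x. f x \<partial>lborel)"
  using nn_integral_real_affine[of f 1 s] by (simp add: add.commute)

lemma compact_supp_integrable:
  fixes g :: "real \<Rightarrow> real"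
  assumes "continuous_on UNIV g" "\<And>x. R < \<bar>x\<bar> \<Longrightarrow> g x = 0"
  shows "integrable lborel g"
proof -
  have "integrable lborel (\<lambda>x. indicator (cball 0 R) x *\<^sub>R g x)"
    by (rule borel_integrable_compact) (auto intro: continuous_on_subset[OF assms(1)])
  moreover have "(\<lambda>x. indicator (cball 0 R) x *\<^sub>R g x) = g"
    using assms(2) by (auto simp: fun_eq_iff indicator_def dist_real_def)
  ultimately show ?thesis by simp
qed

lemma tf_deriv: "test_fun \<phi> \<Longrightarrow> (\<phi> has_real_derivative deriv \<phi> x) (at x)"
  unfolding test_fun_def using DERIV_deriv_iff_real_differentiable by blast

lemma tf_cont: "test_fun \<phi> \<Longrightarrow> continuous_on UNIV \<phi>"
  by (intro continuous_at_imp_continuous_on ballI DERIV_isCont[OF tf_deriv])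

lemma tf_supp: assumes "test_fun \<phi>" shows "\<exists>R. \<forall>x. R < \<bar>x\<bar> \<longrightarrow> \<phi> x = 0 \<and> deriv \<phi> x = 0"
proof -
  obtain R where R: "\<And>x. R < \<bar>x\<bar> \<Longrightarrow> \<phi> x = 0" using assms unfolding test_fun_def by blast
  have "deriv \<phi> x = 0" if x: "R < \<bar>x\<bar>" for x
  proof -
    have "\<forall>\<^sub>F y in nhds x. y \<in> {y. R < \<bar>y\<bar>}"
    proof (rule eventually_nhds_in_open)
      show "open {y::real. R < \<bar>y\<bar>}" by (intro open_Collect_less continuous_intros)
    qed (use x in simp)
    then have ev: "\<forall>\<^sub>F y in nhds x. \<phi> y = 0" by (rule eventually_mono) (auto intro: R)
    have "((\<lambda>y. 0) has_real_derivative 0) (at x)" by simp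
    then have "(\<phi> has_real_derivative 0) (at x)"
      using DERIV_cong_ev[of x x \<phi> "\<lambda>y. 0" 0 0] ev by simp
    then show ?thesis by (rule DERIV_imp_deriv)
  qed
  then show ?thesis using R by blast
qed

lemma tf_measurable: "test_fun \<phi> \<Longrightarrow> \<phi> \<in> borel_measurable borel"
  by (rule borel_measurable_continuous_onI[OF tf_cont])

lemma tf_deriv_measurable: "test_fun \<phi> \<Longrightarrow> deriv \<phi> \<in> borel_measurable borel"
  by (rule borel_measurable_continuous_onI) (simp add: test_fun_def)

lemma tf_L2: assumes "test_fun \<phi>" shows "L2 \<phi>" "L2 (deriv \<phi>)"
proof -
  obtain R where R: "\<And>x. R < \<bar>x\<bar> \<Longrightarrow> \<phi> x = 0 \<and> deriv \<phi> x = 0" using tf_supp[OF assms] by blast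
  have c1: "continuous_on UNIV \<phi>" using tf_cont[OF assms] .
  have c2: "continuous_on UNIV (deriv \<phi>)" using assms by (simp add: test_fun_def)
  have "integrable lborel (\<lambda>x. (\<phi> x)^2)"
    by (rule compact_supp_integrable[where R=R]) (auto intro!: continuous_intros c1 simp: R)
  then show "L2 \<phi>" using assms tf_measurable[OF assms] by (simp add: L2_def)
  have "integrable lborel (\<lambda>x. (deriv \<phi> x)^2)"
    by (rule compact_supp_integrable[where R=R]) (auto intro!: continuous_intros c2 simp: R)
  then show "L2 (deriv \<phi>)" using assms tf_deriv_measurable[OF assms] by (simp add: L2_def)
qed

lemma tf_translate: assumes "test_fun \<phi>"
  shows "test_fun (\<lambda>x. \<phi> (x - t))" "deriv (\<lambda>x. \<phi> (x - t)) = (\<lambda>x. deriv \<phi> (x - t))"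
proof -
  have d: "((\<lambda>x. \<phi> (x - t)) has_real_derivative deriv \<phi> (x - t)) (at x)" for x
  proof -
    have "((\<lambda>x. x - t) has_real_derivative 1) (at x)" by (auto intro!: derivative_eq_intros)
    from DERIV_chain2[OF tf_deriv[OF assms] this] show ?thesis by simp
  qed
  then show dd: "deriv (\<lambda>x. \<phi> (x - t)) = (\<lambda>x. deriv \<phi> (x - t))"
    using DERIV_imp_deriv by blast
  obtain R where R: "\<And>x. R < \<bar>x\<bar> \<Longrightarrow> \<phi> x = 0" using assms unfolding test_fun_def by blast
  have c2: "continuous_on UNIV (deriv \<phi>)" using assms by (simp add: test_fun_def)
  show "test_fun (\<lambda>x. \<phi> (x - t))" unfolding test_fun_def dd
  proof (intro conjI)
    show "\<forall>x. (\<lambda>x. \<phi> (x - t)) differentiable at x" using d real_differentiable_def by blast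
    show "continuous_on UNIV (\<lambda>x. deriv \<phi> (x - t))"
      by (rule continuous_on_compose2[OF c2]) (auto intro!: continuous_intros)
    show "\<exists>R. \<forall>x. R < \<bar>x\<bar> \<longrightarrow> \<phi> (x - t) = 0"
      by (rule exI[of _ "R + \<bar>t\<bar>"]) (auto intro!: R)
  qed
qed

lemma L2_indicator: fixes a b :: real shows "L2 (indicator {a..b} :: real \<Rightarrow> real)"
proof -
  have "integrable lborel (indicator {a..b} :: real \<Rightarrow> real)" by (rule integrable_real_indicator) (simp_all add: emeasure_lborel_Icc_eq)
  moreover have "(\<lambda>x. (indicator {a..b} x :: real)^2) = indicator {a..b}"
    by (auto simp: fun_eq_iff indicator_def)
  ultimately show ?thesis unfolding L2_def by simp
qed


lemma L2_meas[measurable_dest]: "L2 f \<Longrightarrow> f \<in> borel_measurable borel"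
  by (simp add: L2_def)

lemma pair_int:
  fixes f g :: "real \<Rightarrow> real" and y c :: real
  assumes f: "L2 f" and g: "L2 g" and y: "y \<ge> 0"
  shows "integrable (lborel \<Otimes>\<^sub>M lborel) (\<lambda>p. f (fst p) * (indicator {0..y} (snd p) * g (fst p + c * snd p)))"
proof -
  have [measurable]: "f \<in> borel_measurable borel" "g \<in> borel_measurable borel" using f g by (auto simp: L2_def)
  define K where "K = ((\<integral>x. (f x)^2 \<partial>lborel) + (\<integral>x. (g x)^2 \<partial>lborel)) / 2"
  have K0: "K \<ge> 0" unfolding K_def by (intro divide_nonneg_pos add_nonneg_nonneg integral_nonneg_AE) auto
  let ?H = "\<lambda>p. ennreal (indicator {0..y} (snd p) * (((f (fst p))^2 + (g (fst p + c * snd p))^2) / 2))"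
  have inner: "(\<integral>\<^sup>+x. ?H (x, t) \<partial>lborel) = ennreal K * indicator {0..y} t" for t
  proof -
    have gi: "integrable lborel (\<lambda>x. (g (x + c * t))^2)" using L2_translate[OF g, of "c * t"] by (simp add: L2_def)
    have fi: "integrable lborel (\<lambda>x. (f x)^2)" using f by (simp add: L2_def)
    have i: "integrable lborel (\<lambda>x. indicator {0..y} t * (((f x)^2 + (g (x + c * t))^2) / 2))"
      using gi fi by auto
    have "(\<integral>\<^sup>+x. ?H (x, t) \<partial>lborel) = (\<integral>\<^sup>+x. ennreal (indicator {0..y} t * (((f x)^2 + (g (x + c * t))^2) / 2)) \<partial>lborel)"
      by simp
    also have "\<dots> = ennreal (\<integral>x. indicator {0..y} t * (((f x)^2 + (g (x + c * t))^2) / 2) \<partial>lborel)"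
      by (rule nn_integral_eq_integral[OF i]) (auto intro!: always_eventually)
    also have "(\<integral>x. indicator {0..y} t * (((f x)^2 + (g (x + c * t))^2) / 2) \<partial>lborel)
       = indicator {0..y} t * (((\<integral>x. (f x)^2 \<partial>lborel) + (\<integral>x. (g (x + c * t))^2 \<partial>lborel)) / 2)"
      using gi fi by simp
    also have "(\<integral>x. (g (x + c * t))^2 \<partial>lborel) = (\<integral>x. (g x)^2 \<partial>lborel)"
      by (rule int_translate)
    finally show ?thesis unfolding K_def by (cases "t \<in> {0..y}") simp_all
  qed
  have "(\<integral>\<^sup>+p. ?H p \<partial>(lborel \<Otimes>\<^sub>M lborel)) = (\<integral>\<^sup>+t. (\<integral>\<^sup>+x. ?H (x, t) \<partial>lborel) \<partial>lborel)"
    by (rule lborel_pair.nn_integral_snd[symmetric]) measurable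
  also have "\<dots> = ennreal K * emeasure lborel {0..y}"
    by (simp only: inner) (simp add: nn_integral_cmult_indicator)
  also have "\<dots> < \<infinity>" using y by (simp add: ennreal_mult_less_top)
  finally have fin: "(\<integral>\<^sup>+p. ?H p \<partial>(lborel \<Otimes>\<^sub>M lborel)) < \<infinity>" .
  show ?thesis
    unfolding integrable_iff_bounded
  proof
    show "(\<lambda>p. f (fst p) * (indicator {0..y} (snd p) * g (fst p + c * snd p))) \<in> borel_measurable (lborel \<Otimes>\<^sub>M lborel)"
      by measurable
    have "(\<integral>\<^sup>+p. ennreal (norm (f (fst p) * (indicator {0..y} (snd p) * g (fst p + c * snd p)))) \<partial>(lborel \<Otimes>\<^sub>M lborel))
       \<le> (\<integral>\<^sup>+p. ?H p \<partial>(lborel \<Otimes>\<^sub>M lborel))"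
    proof (rule nn_integral_mono)
      fix p :: "real \<times> real"
      have "\<bar>f (fst p) * g (fst p + c * snd p)\<bar> \<le> ((f (fst p))^2 + (g (fst p + c * snd p))^2) / 2"
        by (rule abs_mult_le_sq)
      then show "ennreal (norm (f (fst p) * (indicator {0..y} (snd p) * g (fst p + c * snd p)))) \<le> ?H p"
        by (intro ennreal_leI) (auto simp: indicator_def abs_mult)
    qed
    then show "(\<integral>\<^sup>+p. ennreal (norm (f (fst p) * (indicator {0..y} (snd p) * g (fst p + c * snd p)))) \<partial>(lborel \<Otimes>\<^sub>M lborel)) < \<infinity>"
      using fin by (rule le_less_trans)
  qed
qed

lemma ftc_phi:
  assumes tf: "test_fun \<phi>" and y: "y \<ge> 0"
  shows "(\<integral>t. indicator {0..y} t * deriv \<phi> (x + (-1) * t) \<partial>lborel) = \<phi> x - \<phi> (x - y)"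
proof -
  have c: "continuous_on UNIV (deriv \<phi>)" using tf by (simp add: test_fun_def)
  have "(\<integral>t. (- deriv \<phi> (x - t)) * indicator {0..y} t \<partial>lborel) = \<phi> (x - y) - \<phi> (x - 0)"
  proof (rule integral_FTC_Icc_real[where F="\<lambda>t. \<phi> (x - t)" and f="\<lambda>t. - deriv \<phi> (x - t)", OF y])
    fix t
    have "((\<lambda>t. x - t) has_real_derivative -1) (at t)" by (auto intro!: derivative_eq_intros)
    from DERIV_chain2[OF tf_deriv[OF tf] this]
    show "((\<lambda>t. \<phi> (x - t)) has_real_derivative - deriv \<phi> (x - t)) (at t)" by simp
    have cd: "isCont (deriv \<phi>) (x - t)" using c by (simp add: continuous_on_eq_continuous_at)
    have c1: "isCont (\<lambda>t. x - t) t" by simp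
    have "isCont (\<lambda>t. deriv \<phi> (x - t)) t" using isCont_o2[OF c1 cd] .
    then show "isCont (\<lambda>t. - deriv \<phi> (x - t)) t" by (rule isCont_minus)
  qed
  then show ?thesis by (simp add: mult.commute)
qed

lemma core:
  assumes H: "H1_with_deriv u v" and tf: "test_fun \<phi>" and y: "y \<ge> 0"
  shows "(\<integral>x. (u (x + y) - u x) * \<phi> x \<partial>lborel)
       = (\<integral>x. \<phi> x * (\<integral>t. indicator {0..y} t * v (x + t) \<partial>lborel) \<partial>lborel)"
proof -
  have u: "L2 u" and v: "L2 v" and wd: "weak_deriv u v" using H by (auto simp: H1_with_deriv_def)
  have [measurable]: "u \<in> borel_measurable borel" "v \<in> borel_measurable borel" using u v by (auto simp: L2_def)
  have [measurable]: "\<phi> \<in> borel_measurable borel" "deriv \<phi> \<in> borel_measurable borel" using tf_measurable[OF tf] tf_deriv_measurable[OF tf] by auto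
  have pu: "L2 \<phi>" "L2 (deriv \<phi>)" using tf_L2[OF tf] by auto
  define F1 where "F1 x t = u x * (indicator {0..y} t * deriv \<phi> (x + (-1) * t))" for x t :: real
  define F2 where "F2 x t = \<phi> x * (indicator {0..y} t * v (x + 1 * t))" for x t :: real
  have I1: "integrable (lborel \<Otimes>\<^sub>M lborel) (case_prod F1)"
    using pair_int[OF u pu(2) y, of "-1"] by (simp add: F1_def case_prod_beta')
  have I2: "integrable (lborel \<Otimes>\<^sub>M lborel) (case_prod F2)"
    using pair_int[OF pu(1) v y, of 1] by (simp add: F2_def case_prod_beta')
  have i1: "integrable lborel (\<lambda>x. u (x + y) * \<phi> x)" using L2_mult[OF L2_translate[OF u] pu(1)] .
  have i2: "integrable lborel (\<lambda>x. u x * \<phi> x)" using L2_mult[OF u pu(1)] .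
  have i3: "integrable lborel (\<lambda>x. u x * \<phi> (x - y))" using L2_mult[OF u L2_translate[OF pu(1), of "-y"]] by simp
  have "(\<integral>x. (u (x + y) - u x) * \<phi> x \<partial>lborel) = (\<integral>x. u (x + y) * \<phi> x \<partial>lborel) - (\<integral>x. u x * \<phi> x \<partial>lborel)"
    using i1 i2 by (simp add: left_diff_distrib)
  also have "(\<integral>x. u (x + y) * \<phi> x \<partial>lborel) = (\<integral>x. u x * \<phi> (x - y) \<partial>lborel)"
    using int_translate[of "\<lambda>x. u x * \<phi> (x - y)" y] by simp
  also have "(\<integral>x. u x * \<phi> (x - y) \<partial>lborel) - (\<integral>x. u x * \<phi> x \<partial>lborel) = (\<integral>x. u x * (\<phi> (x - y) - \<phi> x) \<partial>lborel)"
    using i2 i3 by (simp add: right_diff_distrib)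
  also have "\<dots> = - (\<integral>x. (\<integral>t. F1 x t \<partial>lborel) \<partial>lborel)"
  proof -
    have "(\<integral>t. F1 x t \<partial>lborel) = - (u x * (\<phi> (x - y) - \<phi> x))" for x
    proof -
      have "(\<integral>t. F1 x t \<partial>lborel) = u x * (\<integral>t. indicator {0..y} t * deriv \<phi> (x + (-1) * t) \<partial>lborel)"
        unfolding F1_def by (rule integral_mult_right_zero)
      also have "\<dots> = u x * (\<phi> x - \<phi> (x - y))" by (simp only: ftc_phi[OF tf y])
      finally show ?thesis by (simp add: algebra_simps)
    qed
    then show ?thesis by simp
  qed
  also have "(\<integral>x. (\<integral>t. F1 x t \<partial>lborel) \<partial>lborel) = (\<integral>t. (\<integral>x. F1 x t \<partial>lborel) \<partial>lborel)"
    by (rule lborel_pair.Fubini_integral[OF I1, symmetric])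
  also have "\<dots> = - (\<integral>t. (\<integral>x. F2 x t \<partial>lborel) \<partial>lborel)"
  proof -
    have "(\<integral>x. F1 x t \<partial>lborel) = - (\<integral>x. F2 x t \<partial>lborel)" for t
    proof -
      have "(\<integral>x. u x * deriv (\<lambda>x. \<phi> (x - t)) x \<partial>lborel) = - (\<integral>x. v x * \<phi> (x - t) \<partial>lborel)"
        using wd tf_translate(1)[OF tf, of t] unfolding weak_deriv_def by blast
      then have e: "(\<integral>x. u x * deriv \<phi> (x - t) \<partial>lborel) = - (\<integral>x. v x * \<phi> (x - t) \<partial>lborel)"
        by (simp add: tf_translate(2)[OF tf])
      have e2: "(\<integral>x. v x * \<phi> (x - t) \<partial>lborel) = (\<integral>x. \<phi> x * v (x + t) \<partial>lborel)"
        using int_translate[of "\<lambda>x. v x * \<phi> (x - t)" t] by (simp add: mult.commute)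
      have "(\<integral>x. F1 x t \<partial>lborel) = indicator {0..y} t * (\<integral>x. u x * deriv \<phi> (x - t) \<partial>lborel)"
      proof -
        have "(\<lambda>x. F1 x t) = (\<lambda>x. indicator {0..y} t * (u x * deriv \<phi> (x - t)))"
          unfolding F1_def by (simp add: fun_eq_iff)
        then show ?thesis by simp
      qed
      moreover have "(\<integral>x. F2 x t \<partial>lborel) = indicator {0..y} t * (\<integral>x. \<phi> x * v (x + t) \<partial>lborel)"
      proof -
        have "(\<lambda>x. F2 x t) = (\<lambda>x. indicator {0..y} t * (\<phi> x * v (x + t)))"
          unfolding F2_def by (simp add: fun_eq_iff)
        then show ?thesis by simp
      qed
      ultimately show ?thesis using e e2 by simp
    qed
    then show ?thesis by simp
  qed
  also have "(\<integral>t. (\<integral>x. F2 x t \<partial>lborel) \<partial>lborel) = (\<integral>x. (\<integral>t. F2 x t \<partial>lborel) \<partial>lborel)"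
    by (rule lborel_pair.Fubini_integral[OF I2])
  also have "\<dots> = (\<integral>x. \<phi> x * (\<integral>t. indicator {0..y} t * v (x + t) \<partial>lborel) \<partial>lborel)"
    unfolding F2_def by simp
  finally show ?thesis by simp
qed


definition G :: "(real \<Rightarrow> real) \<Rightarrow> real \<Rightarrow> real \<Rightarrow> real" where
  "G v y x = (\<integral>t. indicator {0..y} t * v (x + t) \<partial>lborel)"

lemma G_meas[measurable]: assumes [measurable]: "v \<in> borel_measurable borel" shows "G v y \<in> borel_measurable borel"
proof -
  have "G v y \<in> borel_measurable lborel" unfolding G_def by measurable
  then show ?thesis by simp
qed

lemma G_int: assumes "L2 f" "L2 v" "y \<ge> 0" shows "integrable lborel (\<lambda>x. f x * G v y x)"
proof -
  have "integrable lborel (\<lambda>x. \<integral>t. f (fst (x,t)) * (indicator {0..y} (snd (x,t)) * v (fst (x,t) + 1 * snd (x,t))) \<partial>lborel)"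
    by (rule lborel_pair.integrable_fst'[OF pair_int[OF assms]])
  then show ?thesis unfolding G_def by simp
qed

lemma G_sq_pt:
  assumes v: "L2 v" and y: "y \<ge> 0"
  shows "ennreal ((G v y x)^2) \<le> ennreal y * (\<integral>\<^sup>+t. ennreal (indicator {0..y} t * (v (x + t))^2) \<partial>lborel)"
proof (cases "integrable lborel (\<lambda>t. indicator {0..y} t * v (x + t))")
  case False
  then show ?thesis by (simp add: G_def not_integrable_integral_eq)
next
  case True
  have [measurable]: "v \<in> borel_measurable borel" using v by (simp add: L2_def)
  let ?f = "\<lambda>t. ennreal (indicator {0..y} t)"
  let ?g = "\<lambda>t. ennreal (indicator {0..y} t * \<bar>v (x + t)\<bar>)"
  have "ennreal \<bar>G v y x\<bar> \<le> (\<integral>\<^sup>+t. ennreal (norm (indicator {0..y} t * v (x + t))) \<partial>lborel)"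
    unfolding G_def using integral_norm_bound_ennreal[OF True] by simp
  also have "\<dots> = (\<integral>\<^sup>+t. ?f t * ?g t \<partial>lborel)"
    by (intro nn_integral_cong) (auto simp: indicator_def abs_mult)
  finally have a: "ennreal \<bar>G v y x\<bar> \<le> (\<integral>\<^sup>+t. ?f t * ?g t \<partial>lborel)" .
  have "ennreal ((G v y x)^2) = (ennreal \<bar>G v y x\<bar>)^2"
    by (subst ennreal_power) (simp_all add: power2_abs)
  also have "\<dots> \<le> (\<integral>\<^sup>+t. ?f t * ?g t \<partial>lborel)^2"
    using a by (intro power_mono) auto
  also have "\<dots> \<le> (\<integral>\<^sup>+t. ?f t ^ 2 \<partial>lborel) * (\<integral>\<^sup>+t. ?g t ^ 2 \<partial>lborel)"
    by (rule Cauchy_Schwarz_nn_integral) measurable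
  also have "(\<integral>\<^sup>+t. ?f t ^ 2 \<partial>lborel) = ennreal y"
  proof -
    have "(\<integral>\<^sup>+t. ?f t ^ 2 \<partial>lborel) = (\<integral>\<^sup>+t. indicator {0..y} t \<partial>lborel)"
      by (intro nn_integral_cong) (simp add: indicator_def)
    then show ?thesis using y by simp
  qed
  also have "(\<integral>\<^sup>+t. ?g t ^ 2 \<partial>lborel) = (\<integral>\<^sup>+t. ennreal (indicator {0..y} t * (v (x + t))^2) \<partial>lborel)"
    by (intro nn_integral_cong) (simp add: ennreal_power indicator_def power2_abs)
  finally show ?thesis .
qed

lemma G_sq:
  assumes v: "L2 v" and y: "y \<ge> 0"
  shows "(\<integral>\<^sup>+x. ennreal ((G v y x)^2) \<partial>lborel) \<le> ennreal (y^2 * (\<integral>x. (v x)^2 \<partial>lborel))"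
proof -
  have [measurable]: "v \<in> borel_measurable borel" using v by (simp add: L2_def)
  have vi: "integrable lborel (\<lambda>x. (v x)^2)" using v by (simp add: L2_def)
  define V where "V = (\<integral>x. (v x)^2 \<partial>lborel)"
  have V0: "V \<ge> 0" unfolding V_def by (intro integral_nonneg_AE) auto
  have "(\<integral>\<^sup>+x. ennreal ((G v y x)^2) \<partial>lborel)
      \<le> (\<integral>\<^sup>+x. ennreal y * (\<integral>\<^sup>+t. ennreal (indicator {0..y} t * (v (x + t))^2) \<partial>lborel) \<partial>lborel)"
    by (intro nn_integral_mono G_sq_pt[OF v y])
  also have "\<dots> = ennreal y * (\<integral>\<^sup>+x. (\<integral>\<^sup>+t. ennreal (indicator {0..y} t * (v (x + t))^2) \<partial>lborel) \<partial>lborel)"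
    by (rule nn_integral_cmult) measurable
  also have "(\<integral>\<^sup>+x. (\<integral>\<^sup>+t. ennreal (indicator {0..y} t * (v (x + t))^2) \<partial>lborel) \<partial>lborel)
      = (\<integral>\<^sup>+t. (\<integral>\<^sup>+x. ennreal (indicator {0..y} t * (v (x + t))^2) \<partial>lborel) \<partial>lborel)"
    using lborel_pair.Fubini[of "\<lambda>p. ennreal (indicator {0..y} (snd p) * (v (fst p + snd p))^2)"]
    by simp
  also have "\<dots> = (\<integral>\<^sup>+t. ennreal V * indicator {0..y} t \<partial>lborel)"
  proof (intro nn_integral_cong)
    fix t :: real
    have "(\<integral>\<^sup>+x. ennreal ((v (x + t))^2) \<partial>lborel) = (\<integral>\<^sup>+x. ennreal ((v x)^2) \<partial>lborel)"
      by (rule nn_int_translate[of "\<lambda>x. ennreal ((v x)^2)"]) measurable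
    also have "\<dots> = ennreal V" unfolding V_def by (rule nn_integral_eq_integral[OF vi]) auto
    finally have e: "(\<integral>\<^sup>+x. ennreal ((v (x + t))^2) \<partial>lborel) = ennreal V" .
    show "(\<integral>\<^sup>+x. ennreal (indicator {0..y} t * (v (x + t))^2) \<partial>lborel) = ennreal V * indicator {0..y} t"
      using e by (cases "t \<in> {0..y}") simp_all
  qed
  also have "\<dots> = ennreal V * ennreal y" using y by (simp add: nn_integral_cmult_indicator)
  finally show ?thesis using y V0 unfolding V_def
    by (simp add: ennreal_mult'[symmetric] power2_eq_square mult_ac)
qed

lemma trans_est_pos:
  assumes H: "H1_with_deriv u v" and y: "y \<ge> 0"
  shows "(\<integral>x. (u (x + y) - u x)^2 \<partial>lborel) \<le> y^2 * (\<integral>x. (v x)^2 \<partial>lborel)"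
proof -
  have u: "L2 u" and v: "L2 v" using H by (auto simp: H1_with_deriv_def)
  have [measurable]: "u \<in> borel_measurable borel" "v \<in> borel_measurable borel" using u v by (auto simp: L2_def)
  define d where "d x = u (x + y) - u x" for x
  have d: "L2 d" unfolding d_def by (rule L2_diff[OF L2_translate[OF u] u])
  have [measurable]: "d \<in> borel_measurable borel" using d by (simp add: L2_def)
  define h where "h x = d x - G v y x" for x
  have AE: "AE x in lborel. h x = 0"
  proof (rule fund)
    show "h \<in> borel_measurable borel" unfolding h_def by measurable
    show "integrable lborel (\<lambda>x. h x * indicator {a..b} x)" for a b
    proof -
      have "integrable lborel (\<lambda>x. d x * indicator {a..b} x)" by (rule L2_mult[OF d L2_indicator])
      moreover have "integrable lborel (\<lambda>x. indicator {a..b} x * G v y x)" by (rule G_int[OF L2_indicator v y])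
      ultimately have "integrable lborel (\<lambda>x. d x * indicator {a..b} x - indicator {a..b} x * G v y x)" by auto
      then show ?thesis unfolding h_def by (simp add: algebra_simps)
    qed
    show "(\<integral>x. h x * \<phi> x \<partial>lborel) = 0" if tf: "test_fun \<phi>" for \<phi>
    proof -
      have i1: "integrable lborel (\<lambda>x. d x * \<phi> x)" by (rule L2_mult[OF d tf_L2(1)[OF tf]])
      have i2: "integrable lborel (\<lambda>x. \<phi> x * G v y x)" by (rule G_int[OF tf_L2(1)[OF tf] v y])
      have "(\<integral>x. h x * \<phi> x \<partial>lborel) = (\<integral>x. d x * \<phi> x - \<phi> x * G v y x \<partial>lborel)"
        unfolding h_def by (simp add: algebra_simps)
      also have "\<dots> = (\<integral>x. d x * \<phi> x \<partial>lborel) - (\<integral>x. \<phi> x * G v y x \<partial>lborel)"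
        using i1 i2 by (rule Bochner_Integration.integral_diff)
      also have "(\<integral>x. d x * \<phi> x \<partial>lborel) = (\<integral>x. \<phi> x * G v y x \<partial>lborel)"
        unfolding d_def G_def by (rule core[OF H tf y])
      finally show ?thesis by simp
    qed
  qed
  have di: "integrable lborel (\<lambda>x. (d x)^2)" using d by (simp add: L2_def)
  have "ennreal (\<integral>x. (d x)^2 \<partial>lborel) = (\<integral>\<^sup>+x. ennreal ((d x)^2) \<partial>lborel)"
    by (rule nn_integral_eq_integral[OF di, symmetric]) auto
  also have "\<dots> = (\<integral>\<^sup>+x. ennreal ((G v y x)^2) \<partial>lborel)"
    using AE by (intro nn_integral_cong_AE) (auto simp: h_def elim!: eventually_mono)
  also have "\<dots> \<le> ennreal (y^2 * (\<integral>x. (v x)^2 \<partial>lborel))" by (rule G_sq[OF v y])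
  finally have "ennreal (\<integral>x. (d x)^2 \<partial>lborel) \<le> ennreal (y^2 * (\<integral>x. (v x)^2 \<partial>lborel))" .
  moreover have "0 \<le> y^2 * (\<integral>x. (v x)^2 \<partial>lborel)" by (intro mult_nonneg_nonneg integral_nonneg_AE) auto
  ultimately show ?thesis unfolding d_def by (simp add: ennreal_le_iff)
qed

lemma trans_est:
  assumes H: "H1_with_deriv u v"
  shows "(\<integral>x. (u (x + y) - u x)^2 \<partial>lborel) \<le> y^2 * (\<integral>x. (v x)^2 \<partial>lborel)"
proof (cases "y \<ge> 0")
  case True then show ?thesis by (rule trans_est_pos[OF H])
next
  case False
  have "(\<integral>x. (u (x + y) - u x)^2 \<partial>lborel) = (\<integral>x. (u (x + (-y)) - u x)^2 \<partial>lborel)"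
  proof -
    have "(\<integral>x. (u (x + (-y)) - u x)^2 \<partial>lborel) = (\<integral>x. (u (x + y + (-y)) - u (x + y))^2 \<partial>lborel)"
      using int_translate[of "\<lambda>x. (u (x + (-y)) - u x)^2" y] by simp
    also have "\<dots> = (\<integral>x. (u (x + y) - u x)^2 \<partial>lborel)" by (simp add: power2_commute)
    finally show ?thesis by simp
  qed
  also have "\<dots> \<le> (-y)^2 * (\<integral>x. (v x)^2 \<partial>lborel)" using False by (intro trans_est_pos[OF H]) simp
  finally show ?thesis by simp
qed


lemma nn_sym:
  fixes f :: "real \<Rightarrow> ennreal"
  assumes [measurable]: "f \<in> borel_measurable borel" and sym: "\<And>x. f (-x) = f x"
  shows "(\<integral>\<^sup>+x. f x \<partial>lborel) \<le> 2 * (\<integral>\<^sup>+x. f x * indicator {0..} x \<partial>lborel)"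
proof -
  have "(\<integral>\<^sup>+x. f x \<partial>lborel) \<le> (\<integral>\<^sup>+x. f x * indicator {0..} x + f x * indicator {..0} x \<partial>lborel)"
    by (intro nn_integral_mono) (auto simp: indicator_def)
  also have "\<dots> = (\<integral>\<^sup>+x. f x * indicator {0..} x \<partial>lborel) + (\<integral>\<^sup>+x. f x * indicator {..0} x \<partial>lborel)"
    by (rule nn_integral_add) auto
  also have "(\<integral>\<^sup>+x. f x * indicator {..0} x \<partial>lborel) = (\<integral>\<^sup>+x. f (0 + (-1) * x) * indicator {..0} (0 + (-1) * x) \<partial>lborel)"
    using nn_integral_real_affine[of "\<lambda>x. f x * indicator {..0} x" "-1" 0] by simp
  also have "\<dots> = (\<integral>\<^sup>+x. f x * indicator {0..} x \<partial>lborel)"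
    by (intro nn_integral_cong) (auto simp: sym indicator_def)
  finally show ?thesis by (simp add: mult_2)
qed

lemma piece1:
  assumes "K \<ge> 0"
  shows "(\<integral>\<^sup>+y. ennreal (K / y^2) * indicator {1..} y \<partial>lborel) = ennreal K"
proof -
  have "(\<integral>\<^sup>+y. ennreal (K / y^2) * indicator {1..} y \<partial>lborel) = ennreal (0 - (- K / 1))"
  proof (rule nn_integral_FTC_atLeast[where F="\<lambda>y. - K / y"])
    show "(\<lambda>y. K / y^2) \<in> borel_measurable borel" by measurable
    show "((\<lambda>y. - K / y) has_real_derivative K / y^2) (at y)" if "1 \<le> y" for y
      using that by (auto intro!: derivative_eq_intros simp: power2_eq_square)
    show "0 \<le> K / y^2" for y using assms by simp
    show "((\<lambda>y. - K / y) \<longlongrightarrow> 0) at_top"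
      by (intro tendsto_minus_cancel_left[THEN iffD1] tendsto_divide_0[OF tendsto_const]) (auto intro: filterlim_at_top_imp_at_infinity filterlim_ident)
  qed
  then show ?thesis by simp
qed

lemma piece3:
  assumes "K \<ge> 0" "0 < m" "m \<le> 1"
  shows "(\<integral>\<^sup>+y. ennreal (K / y) * indicator {m..1} y \<partial>lborel) = ennreal (- K * ln m)"
proof -
  have "(\<integral>\<^sup>+y. ennreal (K / y) * indicator {m..1} y \<partial>lborel) = ennreal (K * ln 1 - K * ln m)"
  proof (rule nn_integral_FTC_Icc[where F="\<lambda>y. K * ln y"])
    show "(\<lambda>y. K / y) \<in> borel_measurable borel" by measurable
    show "((\<lambda>y. K * ln y) has_real_derivative K / y) (at y)" if "y \<in> {m..1}" for y
      using that assms by (auto intro!: derivative_eq_intros simp: field_simps)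
    show "0 \<le> K / y" if "y \<in> {m..1}" for y using that assms by simp
  qed (use assms in simp)
  then show ?thesis by simp
qed

lemma T_le_4U:
  assumes u: "L2 u"
  shows "(\<integral>x. (u (x + y) - u x)^2 \<partial>lborel) \<le> 4 * (\<integral>x. (u x)^2 \<partial>lborel)"
proof -
  have [measurable]: "u \<in> borel_measurable borel" using u by (simp add: L2_def)
  have i1: "integrable lborel (\<lambda>x. (u (x + y) - u x)^2)" using L2_diff[OF L2_translate[OF u] u] by (simp add: L2_def)
  have i2: "integrable lborel (\<lambda>x. (u (x + y))^2)" using L2_translate[OF u] by (simp add: L2_def)
  have i3: "integrable lborel (\<lambda>x. (u x)^2)" using u by (simp add: L2_def)
  have "(\<integral>x. (u (x + y) - u x)^2 \<partial>lborel) \<le> (\<integral>x. 2 * (u (x + y))^2 + 2 * (u x)^2 \<partial>lborel)"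
  proof (rule integral_mono[OF i1])
    show "integrable lborel (\<lambda>x. 2 * (u (x + y))^2 + 2 * (u x)^2)" using i2 i3 by auto
    fix x
    have "0 \<le> (u (x + y) + u x)^2" by simp
    then show "(u (x + y) - u x)^2 \<le> 2 * (u (x + y))^2 + 2 * (u x)^2"
      by (simp add: power2_eq_square algebra_simps)
  qed
  also have "\<dots> = 2 * (\<integral>x. (u (x + y))^2 \<partial>lborel) + 2 * (\<integral>x. (u x)^2 \<partial>lborel)"
    using i2 i3 by simp
  also have "(\<integral>x. (u (x + y))^2 \<partial>lborel) = (\<integral>x. (u x)^2 \<partial>lborel)"
    by (rule int_translate[of "\<lambda>x. (u x)^2"])
  finally show ?thesis by simp
qed

lemma L2_norm_diff: "L2_norm (\<lambda>x. u x - u (x + y)) = sqrt (\<integral>x. (u (x + y) - u x)^2 \<partial>lborel)"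
  unfolding L2_norm_def by (simp add: power2_commute)

lemma W_bound:
  assumes H: "H1_with_deriv u v"
  shows "H12w_seminorm u \<ge> 0 \<and> (\<forall>y. (\<integral>x. (u (x + y) - u x)^2 \<partial>lborel) \<le> (H12w_seminorm u)^2 * \<bar>y\<bar>)"
proof -
  have u: "L2 u" and v: "L2 v" using H by (auto simp: H1_with_deriv_def)
  define T where "T y = (\<integral>x. (u (x + y) - u x)^2 \<partial>lborel)" for y
  define U where "U = (\<integral>x. (u x)^2 \<partial>lborel)"
  define V where "V = (\<integral>x. (v x)^2 \<partial>lborel)"
  have U0: "U \<ge> 0" unfolding U_def by (intro integral_nonneg_AE) auto
  have V0: "V \<ge> 0" unfolding V_def by (intro integral_nonneg_AE) auto
  have T0: "T y \<ge> 0" for y unfolding T_def by (intro integral_nonneg_AE) auto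
  have T4: "T y \<le> 4 * U" for y unfolding T_def U_def by (rule T_le_4U[OF u])
  have TV: "T y \<le> y^2 * V" for y unfolding T_def V_def by (rule trans_est[OF H])
  define S where "S = {C. C \<ge> 0 \<and> (\<forall>y. L2_norm (\<lambda>x. u x - u (x + y)) \<le> C * sqrt \<bar>y\<bar>)}"
  have W: "H12w_seminorm u = Inf S" unfolding H12w_seminorm_def S_def ..
  have Sdef: "C \<in> S \<longleftrightarrow> C \<ge> 0 \<and> (\<forall>y. sqrt (T y) \<le> C * sqrt \<bar>y\<bar>)" for C
    unfolding S_def T_def by (simp add: L2_norm_diff)
  define C0 where "C0 = sqrt V + 2 * sqrt U"
  have C0S: "C0 \<in> S"
    unfolding Sdef
  proof (intro conjI allI)
    show "0 \<le> C0" unfolding C0_def using U0 V0 by simp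
    fix y :: real
    show "sqrt (T y) \<le> C0 * sqrt \<bar>y\<bar>"
    proof (cases "\<bar>y\<bar> \<le> 1")
      case True
      have "sqrt (T y) \<le> sqrt (y^2 * V)" using TV by (simp add: real_sqrt_le_mono)
      also have "\<dots> = \<bar>y\<bar> * sqrt V" by (simp add: real_sqrt_mult)
      also have "\<bar>y\<bar> \<le> sqrt \<bar>y\<bar>"
      proof -
        have "\<bar>y\<bar> * \<bar>y\<bar> \<le> \<bar>y\<bar> * 1" using True by (intro mult_left_mono) auto
        then have "\<bar>y\<bar> * \<bar>y\<bar> \<le> \<bar>y\<bar>" by simp
        then have "\<bar>y\<bar>^2 \<le> \<bar>y\<bar>" by (simp add: power2_eq_square)
        then show ?thesis by (rule real_le_rsqrt)
      qed
      then have "\<bar>y\<bar> * sqrt V \<le> sqrt \<bar>y\<bar> * sqrt V" using V0 by (intro mult_right_mono) auto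
      also have "\<dots> \<le> C0 * sqrt \<bar>y\<bar>" unfolding C0_def using U0 by (simp add: algebra_simps)
      finally show ?thesis .
    next
      case False
      have "sqrt (T y) \<le> sqrt (4 * U)" using T4 by (simp add: real_sqrt_le_mono)
      also have "\<dots> = 2 * sqrt U" by (simp add: real_sqrt_mult)
      also have "\<dots> \<le> 2 * sqrt U * sqrt \<bar>y\<bar>" using False U0 by (simp add: mult_le_cancel_left1)
      also have "\<dots> \<le> C0 * sqrt \<bar>y\<bar>" unfolding C0_def using V0 by (simp add: algebra_simps)
      finally show ?thesis .
    qed
  qed
  have bdd: "bdd_below S" unfolding bdd_below_def using Sdef by blast
  have W0: "Inf S \<ge> 0"
  proof (rule cInf_greatest)
    show "S \<noteq> {}" using C0S by blast
    fix C assume "C \<in> S" then show "0 \<le> C" by (simp add: Sdef)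
  qed
  have "T y \<le> (Inf S)^2 * \<bar>y\<bar>" for y
  proof (cases "y = 0")
    case True then show ?thesis by (simp add: T_def)
  next
    case False
    have sy: "sqrt \<bar>y\<bar> > 0" using False by simp
    have "sqrt (T y) / sqrt \<bar>y\<bar> \<le> Inf S"
    proof (rule cInf_greatest)
      show "S \<noteq> {}" using C0S by blast
      fix C assume "C \<in> S"
      then have "sqrt (T y) \<le> C * sqrt \<bar>y\<bar>" by (simp add: Sdef)
      then show "sqrt (T y) / sqrt \<bar>y\<bar> \<le> C" using sy by (simp add: divide_le_eq)
    qed
    then have "sqrt (T y) \<le> Inf S * sqrt \<bar>y\<bar>" using sy by (simp add: divide_le_eq)
    then have "(sqrt (T y))^2 \<le> (Inf S * sqrt \<bar>y\<bar>)^2" using T0[of y] by (intro power_mono) auto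
    then show ?thesis using T0[of y] by (simp add: power_mult_distrib)
  qed
  then show ?thesis using W W0 unfolding T_def by simp
qed

lemma sum3_le:
  fixes a b c :: ennreal
  shows "a \<le> a + b + c" "b \<le> a + b + c" "c \<le> a + b + c"
  by (simp_all add: add.assoc add_increasing2 add_increasing)

lemma aux_lin: fixes U c L p q :: real
  shows "c \<le> L \<Longrightarrow> p \<le> q \<Longrightarrow> 0 \<le> L \<Longrightarrow> 0 \<le> q \<Longrightarrow> 8*U + 2*p + 2*c \<le> 8*(U + L + q)"
  by (simp only: distrib_left)

theorem proposition12:
  "\<exists>C::real. C > 0 \<and> (\<forall>(\<alpha>::real) u v. \<alpha> > 0 \<longrightarrow> H1_with_deriv u v \<longrightarrow>
     H12_seminorm_sq u \<le> ennreal (C * ((L2_norm u)\<^sup>2 + \<bar>ln \<alpha>\<bar> * (H12w_seminorm u)\<^sup>2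
        + \<alpha> * (\<integral>x. (v x)\<^sup>2 \<partial>lborel))))"
proof (intro exI[of _ 8] conjI allI impI)
  show "(0::real) < 8" by simp
  fix \<alpha> :: real and u v :: "real \<Rightarrow> real"
  assume a0: "\<alpha> > 0" and H: "H1_with_deriv u v"
  have u: "L2 u" and v: "L2 v" using H by (auto simp: H1_with_deriv_def)
  have [measurable]: "u \<in> borel_measurable borel" using u by (simp add: L2_def)
  define T where "T y = (\<integral>x. (u (x + y) - u x)^2 \<partial>lborel)" for y
  define U where "U = (\<integral>x. (u x)^2 \<partial>lborel)"
  define V where "V = (\<integral>x. (v x)^2 \<partial>lborel)"
  define W where "W = H12w_seminorm u"
  define m where "m = min \<alpha> 1"
  have m0: "0 < m" "m \<le> 1" "m \<le> \<alpha>" using a0 by (auto simp: m_def)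
  have U0: "U \<ge> 0" unfolding U_def by (intro integral_nonneg_AE) auto
  have V0: "V \<ge> 0" unfolding V_def by (intro integral_nonneg_AE) auto
  have T0: "T y \<ge> 0" for y unfolding T_def by (intro integral_nonneg_AE) auto
  have T4: "T y \<le> 4 * U" for y unfolding T_def U_def by (rule T_le_4U[OF u])
  have TV: "T y \<le> y^2 * V" for y unfolding T_def V_def by (rule trans_est[OF H])
  have TW: "T y \<le> W^2 * \<bar>y\<bar>" for y using W_bound[OF H] unfolding T_def W_def by blast
  have W0: "W \<ge> 0" using W_bound[OF H] unfolding W_def by blast
  have L2n: "(L2_norm u)^2 = U" unfolding L2_norm_def U_def using U0 U_def by simp
  have "H12_seminorm_sq u = (\<integral>\<^sup>+y. (\<integral>\<^sup>+x. ennreal ((u (x + y) - u x)^2 / y^2) \<partial>lborel) \<partial>lborel)"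
    unfolding H12_seminorm_sq_def
    using lborel_pair.nn_integral_snd[of "\<lambda>p. ennreal ((u (fst p + snd p) - u (fst p))^2 / (snd p)^2)"]
    by simp
  also have "\<dots> = (\<integral>\<^sup>+y. ennreal (T y / y^2) \<partial>lborel)"
  proof (intro nn_integral_cong)
    fix y :: real
    have i1: "integrable lborel (\<lambda>x. (u (x + y) - u x)^2)"
      using L2_diff[OF L2_translate[OF u] u] by (simp add: L2_def)
    then have i2: "integrable lborel (\<lambda>x. (u (x + y) - u x)^2 / y^2)" by simp
    have "(\<integral>\<^sup>+x. ennreal ((u (x + y) - u x)^2 / y^2) \<partial>lborel) = ennreal (\<integral>x. (u (x + y) - u x)^2 / y^2 \<partial>lborel)"
      by (rule nn_integral_eq_integral[OF i2]) auto
    then show "(\<integral>\<^sup>+x. ennreal ((u (x + y) - u x)^2 / y^2) \<partial>lborel) = ennreal (T y / y^2)"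
      unfolding T_def by simp
  qed
  also have "\<dots> \<le> (\<integral>\<^sup>+y. ennreal (4 * U / y^2) * indicator {1..} \<bar>y\<bar> + ennreal V * indicator {0..m} \<bar>y\<bar>
        + ennreal (W^2 / \<bar>y\<bar>) * indicator {m..1} \<bar>y\<bar> \<partial>lborel)" (is "_ \<le> (\<integral>\<^sup>+y. ?hb y \<partial>lborel)")
  proof (intro nn_integral_mono)
    fix y :: real
    show "ennreal (T y / y^2) \<le> ?hb y"
    proof (cases "y = 0")
      case True then show ?thesis by simp
    next
      case False
      have y2: "y^2 > 0" using False by simp
      consider "1 \<le> \<bar>y\<bar>" | "\<bar>y\<bar> \<le> m" | "m \<le> \<bar>y\<bar> \<and> \<bar>y\<bar> \<le> 1" by linarith
      then show ?thesis
      proof cases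
        case 1
        have "T y / y^2 \<le> 4 * U / y^2" using T4 y2 by (intro divide_right_mono) auto
        then have "ennreal (T y / y^2) \<le> ennreal (4 * U / y^2) * indicator {1..} \<bar>y\<bar>"
          using 1 by (simp add: ennreal_leI)
        then show ?thesis using sum3_le(1) order_trans by blast
      next
        case 2
        have "T y / y^2 \<le> V" using TV y2 by (simp add: divide_le_eq mult.commute)
        then have "ennreal (T y / y^2) \<le> ennreal V * indicator {0..m} \<bar>y\<bar>"
          using 2 by (simp add: ennreal_leI)
        then show ?thesis using sum3_le(2) order_trans by blast
      next
        case 3
        have "T y / y^2 \<le> W^2 * \<bar>y\<bar> / y^2" using TW y2 by (intro divide_right_mono) auto
        also have "\<dots> = W^2 / \<bar>y\<bar>"
        proof -
          have yy: "y^2 = \<bar>y\<bar> * \<bar>y\<bar>" by (simp add: power2_eq_square)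
          have "\<bar>y\<bar> \<noteq> 0" using False by simp
          then show ?thesis unfolding yy by (simp add: field_simps)
        qed
        finally have "ennreal (T y / y^2) \<le> ennreal (W^2 / \<bar>y\<bar>) * indicator {m..1} \<bar>y\<bar>"
          using 3 by (simp add: ennreal_leI)
        then show ?thesis using sum3_le(3) order_trans by blast
      qed
    qed
  qed
  also have "\<dots> \<le> 2 * (\<integral>\<^sup>+y. ?hb y * indicator {0..} y \<partial>lborel)"
    by (rule nn_sym) (auto)
  also have "(\<integral>\<^sup>+y. ?hb y * indicator {0..} y \<partial>lborel)
     \<le> (\<integral>\<^sup>+y. ennreal (4 * U / y^2) * indicator {1..} y + ennreal V * indicator {0..m} y
        + ennreal (W^2 / y) * indicator {m..1} y \<partial>lborel)"
    by (intro nn_integral_mono) (auto simp: indicator_def)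
  also have "\<dots> = (\<integral>\<^sup>+y. ennreal (4 * U / y^2) * indicator {1..} y \<partial>lborel)
      + (\<integral>\<^sup>+y. ennreal V * indicator {0..m} y \<partial>lborel)
      + (\<integral>\<^sup>+y. ennreal (W^2 / y) * indicator {m..1} y \<partial>lborel)"
    by (simp add: nn_integral_add)
  also have "\<dots> = ennreal (4 * U) + ennreal V * ennreal m + ennreal ((- (W^2)) * ln m)"
    using piece1[of "4 * U"] piece3[of "W^2" m] U0 m0
    by (simp add: nn_integral_cmult_indicator)
  also have "2 * (ennreal (4 * U) + ennreal V * ennreal m + ennreal ((- (W^2)) * ln m))
      = ennreal (8 * U + 2 * (V * m) + 2 * ((- (W^2)) * ln m))"
  proof -
    have "ln m \<le> 0" using m0 by simp
    then have l: "(- (W^2)) * ln m \<ge> 0" by (simp add: mult_nonneg_nonpos)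
    have vm: "V * m \<ge> 0" using V0 m0 by simp
    have e1: "ennreal V * ennreal m = ennreal (V * m)" using V0 m0 by (simp add: ennreal_mult)
    have e2: "ennreal (4 * U) + ennreal (V * m) + ennreal ((- (W^2)) * ln m)
        = ennreal (4 * U + V * m + (- (W^2)) * ln m)"
      using ennreal_plus[of "4 * U + V * m" "(- (W^2)) * ln m"] ennreal_plus[of "4 * U" "V * m"] U0 vm l
      by simp
    define X where "X = 4 * U + V * m + (- (W^2)) * ln m"
    have X0: "X \<ge> 0" unfolding X_def using U0 vm l by simp
    have e3: "2 * ennreal X = ennreal (2 * X)" using ennreal_mult[of 2 X] X0 by simp
    have e4: "2 * X = 8 * U + 2 * (V * m) + 2 * ((- (W^2)) * ln m)" unfolding X_def by (simp add: algebra_simps)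
    show ?thesis unfolding e1 e2 X_def[symmetric] e3 e4 ..
  qed
  also have "\<dots> \<le> ennreal (8 * ((L2_norm u)\<^sup>2 + \<bar>ln \<alpha>\<bar> * (H12w_seminorm u)\<^sup>2
        + \<alpha> * (\<integral>x. (v x)\<^sup>2 \<partial>lborel)))"
  proof (rule ennreal_leI)
    have ln: "- ln m \<le> \<bar>ln \<alpha>\<bar>"
      using a0 by (cases "\<alpha> \<le> 1") (auto simp: m_def)
    have "W^2 * (- ln m) \<le> W^2 * \<bar>ln \<alpha>\<bar>" using ln by (intro mult_left_mono) auto
    then have g1: "(- (W^2)) * ln m \<le> \<bar>ln \<alpha>\<bar> * W^2" by (simp add: mult.commute)
    have "V * m \<le> V * \<alpha>" using V0 m0 by (intro mult_left_mono) auto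
    then have g2: "V * m \<le> \<alpha> * V" by (simp add: mult.commute)
    have g3: "0 \<le> \<bar>ln \<alpha>\<bar> * W^2" by simp
    have g4: "0 \<le> \<alpha> * V" using a0 V0 by simp
    have "8 * U + 2 * (V * m) + 2 * ((- (W^2)) * ln m) \<le> 8 * (U + \<bar>ln \<alpha>\<bar> * W^2 + \<alpha> * V)"
      by (rule aux_lin[OF g1 g2 g3 g4])
    then show "8 * U + 2 * (V * m) + 2 * ((- (W^2)) * ln m)
        \<le> 8 * ((L2_norm u)\<^sup>2 + \<bar>ln \<alpha>\<bar> * (H12w_seminorm u)\<^sup>2 + \<alpha> * (\<integral>x. (v x)\<^sup>2 \<partial>lborel))"
      unfolding L2n W_def[symmetric] V_def[symmetric] .
  qed
  finally show "H12_seminorm_sq u \<le> ennreal (8 * ((L2_norm u)\<^sup>2 + \<bar>ln \<alpha>\<bar> * (H12w_seminorm u)\<^sup>2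
        + \<alpha> * (\<integral>x. (v x)\<^sup>2 \<partial>lborel)))" by (simp add: mult_mono)
qed


end
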